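(* Let $A_1,A_2,A_3$ be $m\times m$ complex positive semidefinite matrices. Then $$\operatorname{per}(A_1+A_2+A_3)+\operatorname{per}A_1+\operatorname{per}A_2+\operatorname{per}A_3\;\ge\;\operatorname{per}(A_1+A_2)+\operatorname{per}(A_1+A_3)+\operatorname{per}(A_2+A_3).$$
   Context: The permanent of an $m\times m$ matrix $X=(x_{ij})$ is $\operatorname{per}X=\sum_{\sigma\in S_m}\prod_{t=1}^m x_{t\,\sigma(t)}$. *)

theory Defs
  imports "HOL-Analysis.Analysis" "HOL-Library.Complex_Order"
begin

definition per :: "'a::comm_semiring_1^'n::finite^'n \<Rightarrow> 'a" where
  "per A = (\<Sum>p | p permutes (UNIV :: 'n set). \<Prod>i\<in>UNIV. A $ i $ p i)"

text \<open>Complex positive semidefinite: Hermitian with nonnegative quadratic form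
  x^* A x (order on complex from Complex_Order: nonnegative real).\<close>
definition psd :: "complex^'n::finite^'n \<Rightarrow> bool" where
  "psd A \<longleftrightarrow> (\<forall>i j. A $ i $ j = cnj (A $ j $ i)) \<and>
     (\<forall>x :: complex^'n. 0 \<le> (\<Sum>i\<in>UNIV. \<Sum>j\<in>UNIV. cnj (x $ i) * A $ i $ j * x $ j))"

end

theory Submission imports Defs "HOL-Combinatorics.Combinatorics" begin

definition qf :: "('n::finite \<Rightarrow> 'n \<Rightarrow> complex) \<Rightarrow> ('n \<Rightarrow> complex) \<Rightarrow> complex" where
  "qf B x = (\<Sum>i\<in>UNIV. \<Sum>j\<in>UNIV. cnj (x i) * B i j * x j)"

definition psdf :: "('n::finite \<Rightarrow> 'n \<Rightarrow> complex) \<Rightarrow> bool" where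
  "psdf B \<longleftrightarrow> (\<forall>i j. B i j = cnj (B j i)) \<and> (\<forall>x. 0 \<le> qf B x)"

lemma qf_expand:
  "qf B (\<lambda>i. x i + c * (if i = s then 1 else 0)) =
    qf B x + c * (\<Sum>i\<in>UNIV. cnj (x i) * B i s) + cnj c * (\<Sum>j\<in>UNIV. B s j * x j) + cnj c * c * B s s"
proof -
  have "qf B (\<lambda>i. x i + c * (if i = s then 1 else 0)) =
     (\<Sum>i\<in>UNIV. \<Sum>j\<in>UNIV. cnj (x i) * B i j * x j + cnj (x i) * B i j * (c * (if j = s then 1 else 0))
       + cnj c * (if i = s then 1 else 0) * B i j * x j + cnj c * (if i = s then 1 else 0) * B i j * (c * (if j = s then 1 else 0)))"
    unfolding qf_def by (intro sum.cong refl) (auto simp: algebra_simps)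
  also have "\<dots> = qf B x + (\<Sum>i\<in>UNIV. \<Sum>j\<in>UNIV. cnj (x i) * B i j * (c * (if j = s then 1 else 0)))
     + (\<Sum>i\<in>UNIV. \<Sum>j\<in>UNIV. cnj c * (if i = s then 1 else 0) * B i j * x j)
     + (\<Sum>i\<in>UNIV. \<Sum>j\<in>UNIV. cnj c * (if i = s then 1 else 0) * B i j * (c * (if j = s then 1 else 0)))"
    unfolding qf_def by (simp add: sum.distrib)
  also have "(\<Sum>i\<in>UNIV. \<Sum>j\<in>UNIV. cnj (x i) * B i j * (c * (if j = s then 1 else 0))) = c * (\<Sum>i\<in>UNIV. cnj (x i) * B i s)"
    by (simp add: sum_distrib_left algebra_simps if_distrib sum.delta cong: if_cong)
  also have "(\<Sum>i\<in>UNIV. \<Sum>j\<in>UNIV. cnj c * (if i = s then 1 else 0) * B i j * x j) = 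
     (\<Sum>i\<in>UNIV. if i = s then (\<Sum>j\<in>UNIV. cnj c * B s j * x j) else 0)"
    by (intro sum.cong) auto
  also have "\<dots> = cnj c * (\<Sum>j\<in>UNIV. B s j * x j)"
    by (simp add: sum_distrib_left algebra_simps)
  also have "(\<Sum>i\<in>UNIV. \<Sum>j\<in>UNIV. cnj c * (if i = s then 1 else 0) * B i j * (c * (if j = s then 1 else 0))) = 
     (\<Sum>i\<in>UNIV. if i = s then (\<Sum>j\<in>UNIV. cnj c * B s j * (c * (if j = s then 1 else 0))) else 0)"
    by (intro sum.cong) auto
  also have "\<dots> = cnj c * c * B s s"
    by (simp add: algebra_simps if_distrib cong: if_cong)
  finally show ?thesis .
qed

lemma ifm1: "(if P then 1 else 0) * (z::complex) = (if P then z else 0)" by simp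
lemma ifm2: "(z::complex) * (if P then 1 else 0) = (if P then z else 0)" by simp
lemma ifm3: "cnj (if P then 1 else 0) = (if P then 1 else 0)" by simp

lemma psdf_qf: "psdf B \<Longrightarrow> 0 \<le> qf B x" by (simp add: psdf_def)
lemma psdf_herm: "psdf B \<Longrightarrow> B i j = cnj (B j i)" unfolding psdf_def by blast

lemma qf_zero: "qf B (\<lambda>i. 0) = 0" by (simp add: qf_def)

lemma psdf_diag: assumes "psdf B" shows "0 \<le> B s s"
proof -
  have "0 \<le> qf B (\<lambda>i. 0 + 1 * (if i = s then 1 else 0))" using assms(1) by (rule psdf_qf)
  also have "\<dots> = B s s" by (subst qf_expand) (simp add: qf_zero)
  finally show ?thesis .
qed

lemma psdf_zero_row: assumes "psdf B" "B s s = 0" shows "B s j = 0"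
proof (rule ccontr)
  assume nz: "B s j \<noteq> 0"
  define b where "b = B s j"
  have js: "j \<noteq> s" using nz assms(2) by auto
  have herm: "B j s = cnj b" using assms(1) unfolding psdf_def b_def by blast
  define r where "r = (Re (B j j) + 1) / (2 * ((Re b)^2 + (Im b)^2))"
  have pos: "(Re b)^2 + (Im b)^2 > 0" using nz b_def
    by (simp add: sum_power2_gt_zero_iff complex_eq_iff)
  define c where "c = - (of_real r * b)"
  define x where "x = (\<lambda>i::'a. if i = j then 1 else (0::complex))"
  have "0 \<le> qf B (\<lambda>i. x i + c * (if i = s then 1 else 0))" using assms(1) by (rule psdf_qf)
  also have "\<dots> = qf B x + c * (\<Sum>i\<in>UNIV. cnj (x i) * B i s) + cnj c * (\<Sum>j\<in>UNIV. B s j * x j) + cnj c * c * B s s"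
    by (rule qf_expand)
  also have "qf B x = B j j" unfolding qf_def x_def by (simp add: ifm1 ifm2 ifm3 cong: if_cong)
  also have "(\<Sum>i\<in>UNIV. cnj (x i) * B i s) = cnj b" unfolding x_def using herm by (simp add: ifm1 ifm2 ifm3)
  also have "(\<Sum>j\<in>UNIV. B s j * x j) = b" unfolding x_def b_def by (simp add: ifm1 ifm2 ifm3)
  finally have "0 \<le> B j j + c * cnj b + cnj c * b" using assms(2) by simp
  hence "0 \<le> Re (B j j) - 2 * r * ((Re b)^2 + (Im b)^2)"
    unfolding less_eq_complex_def c_def by (simp add: power2_eq_square algebra_simps)
  also have "2 * r * ((Re b)^2 + (Im b)^2) = Re (B j j) + 1" unfolding r_def using pos by (simp add: field_simps)
  finally show False by simp
qed

lemma gram_aux: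
  fixes S :: "'n::finite set"
  assumes "finite S"
  shows "\<forall>B. psdf B \<and> (\<forall>i j. i \<notin> S \<or> j \<notin> S \<longrightarrow> B i j = 0) \<longrightarrow>
     (\<exists>V::nat \<Rightarrow> 'n \<Rightarrow> complex. \<forall>i j. B i j = (\<Sum>k<card S. cnj (V k i) * V k j))"
  using assms
proof (induction S rule: finite_induct)
  case empty
  then show ?case by auto
next
  case (insert s S)
  show ?case
  proof (intro allI impI, elim conjE)
    fix B :: "'n \<Rightarrow> 'n \<Rightarrow> complex"
    assume ps: "psdf B" and sup: "\<forall>i j. i \<notin> insert s S \<or> j \<notin> insert s S \<longrightarrow> B i j = 0"
    have herm: "\<And>i j. B i j = cnj (B j i)" using psdf_herm[OF ps] by blast
    have cardI: "card (insert s S) = Suc (card S)" using insert by simp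
    show "\<exists>V::nat \<Rightarrow> 'n \<Rightarrow> complex. \<forall>i j. B i j = (\<Sum>k<card (insert s S). cnj (V k i) * V k j)"
    proof (cases "B s s = 0")
      case True
      have r0: "\<And>j. B s j = 0" using psdf_zero_row[OF ps True] .
      have c0: "\<And>j. B j s = 0" using r0 herm by (metis complex_cnj_zero)
      have "\<forall>i j. i \<notin> S \<or> j \<notin> S \<longrightarrow> B i j = 0"
      proof (intro allI impI)
        fix i j assume "i \<notin> S \<or> j \<notin> S"
        then show "B i j = 0" using sup r0[of j] c0[of i] by (cases "i = s"; cases "j = s") auto
      qed
      then obtain V where V: "\<forall>i j. B i j = (\<Sum>k<card S. cnj (V k i) * V k j)"
        using insert.IH ps by blast
      show ?thesis
        by (rule exI[of _ "V(card S := (\<lambda>_. 0))"]) (simp add: cardI V)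
    next
      case False
      have "0 \<le> B s s" by (rule psdf_diag[OF ps])
      then obtain dr where dr: "B s s = of_real dr" "dr > 0" using False
        unfolding less_eq_complex_def
        by (metis complex_eq_iff less_eq_real_def of_real_0 Re_complex_of_real Im_complex_of_real)
      define sd where "sd = sqrt dr"
      have sdpos: "sd > 0" using dr sd_def by simp
      have sdsq: "complex_of_real sd * complex_of_real sd = B s s"
        unfolding dr(1) sd_def of_real_mult[symmetric] using dr(2) by simp
      define v where "v = (\<lambda>j. B s j / of_real sd)"
      define B' where "B' = (\<lambda>i j. B i j - cnj (v i) * v j)"
      have cv: "cnj (v i) * v j = B i s * B s j / B s s" for i j
        unfolding v_def using sdsq herm[of i s] sdpos by (simp add: field_simps)
      have "psdf B'"
        unfolding psdf_def
      proof (intro conjI allI)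
        fix i j show "B' i j = cnj (B' j i)" unfolding B'_def using herm[of i j] by simp
      next
        fix x :: "'n \<Rightarrow> complex"
        define w where "w = (\<Sum>j\<in>UNIV. B s j * x j)"
        define c where "c = - w / B s s"
        have w2: "(\<Sum>i\<in>UNIV. cnj (x i) * B i s) = cnj w"
          unfolding w_def cnj_sum
        proof (intro sum.cong refl)
          fix i show "cnj (x i) * B i s = cnj (B s i * x i)" using herm[of i s] by simp
        qed
        have cd: "cnj (B s s) = B s s" using dr by simp
        have "0 \<le> qf B (\<lambda>i. x i + c * (if i = s then 1 else 0))" using ps by (rule psdf_qf)
        also have "\<dots> = qf B x + c * cnj w + cnj c * w + cnj c * c * B s s"
          by (subst qf_expand) (simp add: w2 w_def)
        also have "\<dots> = qf B x - cnj w * w / B s s"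
          unfolding c_def using False cd by (simp add: field_simps)
        also have "cnj w * w / B s s = (\<Sum>i\<in>UNIV. \<Sum>j\<in>UNIV. cnj (x i) * (cnj (v i) * v j) * x j)"
        proof -
          have "(\<Sum>i\<in>UNIV. \<Sum>j\<in>UNIV. cnj (x i) * (cnj (v i) * v j) * x j)
              = (\<Sum>i\<in>UNIV. \<Sum>j\<in>UNIV. (cnj (x i) * B i s) * (B s j * x j) / B s s)"
            by (intro sum.cong refl) (simp add: cv)
          also have "\<dots> = (\<Sum>i\<in>UNIV. cnj (x i) * B i s) * (\<Sum>j\<in>UNIV. B s j * x j) / B s s"
            by (simp add: sum_product sum_divide_distrib)
          finally show ?thesis by (simp add: w2 w_def)
        qed
        also have "qf B x - \<dots> = qf B' x"
          unfolding qf_def B'_def by (simp add: sum_subtractf[symmetric] algebra_simps)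
        finally show "0 \<le> qf B' x" .
      qed
      moreover have "\<forall>i j. i \<notin> S \<or> j \<notin> S \<longrightarrow> B' i j = 0"
      proof (intro allI impI)
        fix i j assume "i \<notin> S \<or> j \<notin> S"
        moreover have "B' s j = 0" for j unfolding B'_def using cv[of s j] False by simp
        moreover have "B' i s = 0" for i unfolding B'_def using cv[of i s] False by simp
        moreover have "B' i j = 0" if "i \<notin> insert s S \<or> j \<notin> insert s S" for i j
          unfolding B'_def using cv[of i j] sup that by auto
        ultimately show "B' i j = 0" by (metis insert_iff)
      qed
      ultimately obtain V where V: "\<forall>i j. B' i j = (\<Sum>k<card S. cnj (V k i) * V k j)"
        using insert.IH by blast
      have "B i j = B' i j + cnj (v i) * v j" for i j unfolding B'_def by simp
      then show ?thesis
        by (intro exI[of _ "V(card S := v)"]) (simp add: cardI V)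
    qed
  qed
qed

lemma gram:
  fixes B :: "'n::finite \<Rightarrow> 'n \<Rightarrow> complex"
  assumes "psdf B"
  shows "\<exists>V::nat \<Rightarrow> 'n \<Rightarrow> complex. \<forall>i j. B i j = (\<Sum>k<CARD('n). cnj (V k i) * V k j)"
  using gram_aux[of "UNIV::'n set"] assms by simp


lemma cnj_mult_self_nonneg: "0 \<le> cnj (a::complex) * a"
  by (simp add: less_eq_complex_def)

lemma tensor_nonneg:
  fixes B :: "'n::finite \<Rightarrow> 'n \<Rightarrow> 'n \<Rightarrow> complex"
  assumes ps: "\<And>t. psdf (B t)"
  shows "0 \<le> (\<Sum>\<rho>\<in>P. \<Sum>\<tau>\<in>P. \<Prod>t\<in>UNIV. B t (\<rho> t) (\<tau> t))"
proof -
  have "\<forall>t. \<exists>V::nat \<Rightarrow> 'n \<Rightarrow> complex. \<forall>i j. B t i j = (\<Sum>k<CARD('n). cnj (V k i) * V k j)"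
    using gram ps by blast
  then obtain V where V: "\<And>t i j. B t i j = (\<Sum>k<CARD('n). cnj (V t k i) * V t k j)"
    by metis
  define K where "K = PiE (UNIV::'n set) (\<lambda>_. {..<CARD('n)})"
  define z where "z = (\<lambda>\<kappa> (\<rho>::'n\<Rightarrow>'n). \<Prod>t\<in>UNIV. V t (\<kappa> t) (\<rho> t))"
  have eq: "(\<Prod>t\<in>UNIV. B t (\<rho> t) (\<tau> t)) = (\<Sum>\<kappa>\<in>K. cnj (z \<kappa> \<rho>) * z \<kappa> \<tau>)" for \<rho> \<tau>
  proof -
    have "(\<Prod>t\<in>UNIV. B t (\<rho> t) (\<tau> t)) = (\<Prod>t\<in>UNIV. \<Sum>k<CARD('n). cnj (V t k (\<rho> t)) * V t k (\<tau> t))"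
      by (simp only: V)
    also have "\<dots> = (\<Sum>\<kappa>\<in>K. \<Prod>t\<in>UNIV. cnj (V t (\<kappa> t) (\<rho> t)) * V t (\<kappa> t) (\<tau> t))"
      unfolding K_def by (rule prod_sum_PiE) auto
    also have "\<dots> = (\<Sum>\<kappa>\<in>K. cnj (z \<kappa> \<rho>) * z \<kappa> \<tau>)"
      unfolding z_def by (simp add: prod.distrib)
    finally show ?thesis .
  qed
  have "(\<Sum>\<rho>\<in>P. \<Sum>\<tau>\<in>P. \<Prod>t\<in>UNIV. B t (\<rho> t) (\<tau> t)) = (\<Sum>\<rho>\<in>P. \<Sum>\<tau>\<in>P. \<Sum>\<kappa>\<in>K. cnj (z \<kappa> \<rho>) * z \<kappa> \<tau>)"
    by (simp only: eq)
  also have "\<dots> = (\<Sum>\<kappa>\<in>K. \<Sum>\<rho>\<in>P. \<Sum>\<tau>\<in>P. cnj (z \<kappa> \<rho>) * z \<kappa> \<tau>)"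
    by (simp add: sum.swap[of _ P K] sum.swap[of _ P K])
  also have "\<dots> = (\<Sum>\<kappa>\<in>K. cnj (\<Sum>\<rho>\<in>P. z \<kappa> \<rho>) * (\<Sum>\<tau>\<in>P. z \<kappa> \<tau>))"
    by (simp add: sum_product)
  also have "0 \<le> \<dots>"
    by (intro sum_nonneg cnj_mult_self_nonneg)
  finally show ?thesis by simp
qed

lemma per_double:
  fixes Y :: "'a::comm_semiring_1^'n::finite^'n"
  shows "(\<Sum>\<rho>\<in>{p. p permutes (UNIV::'n set)}. \<Sum>\<tau>\<in>{p. p permutes (UNIV::'n set)}. \<Prod>t\<in>UNIV. Y $ (\<rho> t) $ (\<tau> t))
     = of_nat (fact CARD('n)) * per Y"
proof -
  have inner: "(\<Sum>\<tau>\<in>{p. p permutes (UNIV::'n set)}. \<Prod>t\<in>UNIV. Y $ (\<rho> t) $ (\<tau> t)) = per Y"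
    if r: "\<rho> permutes (UNIV::'n set)" for \<rho>
  proof -
    have "(\<Prod>t\<in>UNIV. Y $ (\<rho> t) $ (\<tau> t)) = (\<Prod>i\<in>UNIV. Y $ i $ ((\<tau> \<circ> inv \<rho>) i))" for \<tau>
    proof -
      have "(\<Prod>t\<in>UNIV. Y $ (\<rho> t) $ (\<tau> t)) = (\<Prod>t\<in>UNIV. (\<lambda>i. Y $ i $ ((\<tau> \<circ> inv \<rho>) i)) (\<rho> t))"
        using permutes_inverses(2)[OF r] by simp
      also have "\<dots> = (\<Prod>i\<in>UNIV. Y $ i $ ((\<tau> \<circ> inv \<rho>) i))"
        by (rule prod.reindex_bij_betw[OF permutes_imp_bij[OF r]])
      finally show ?thesis .
    qed
    hence "(\<Sum>\<tau>\<in>{p. p permutes (UNIV::'n set)}. \<Prod>t\<in>UNIV. Y $ (\<rho> t) $ (\<tau> t))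
        = (\<Sum>\<tau>\<in>{p. p permutes (UNIV::'n set)}. (\<lambda>\<sigma>. \<Prod>i\<in>UNIV. Y $ i $ (\<sigma> i)) (\<tau> \<circ> inv \<rho>))"
      by simp
    also have "\<dots> = (\<Sum>\<sigma>\<in>{p. p permutes (UNIV::'n set)}. \<Prod>i\<in>UNIV. Y $ i $ (\<sigma> i))"
      by (rule sum_permutations_compose_right[symmetric, OF permutes_inv[OF r]])
    finally show ?thesis unfolding per_def .
  qed
  have "(\<Sum>\<rho>\<in>{p. p permutes (UNIV::'n set)}. \<Sum>\<tau>\<in>{p. p permutes (UNIV::'n set)}. \<Prod>t\<in>UNIV. Y $ (\<rho> t) $ (\<tau> t))
     = (\<Sum>\<rho>\<in>{p. p permutes (UNIV::'n set)}. per Y)"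
    by (rule sum.cong) (simp_all add: inner)
  also have "\<dots> = of_nat (fact CARD('n)) * per Y"
    by (simp add: card_permutations)
  finally show ?thesis .
qed


definition W :: "(nat \<Rightarrow> complex^'n::finite^'n) \<Rightarrow> ('n \<Rightarrow> nat) \<Rightarrow> complex" where
  "W A f = (\<Sum>\<rho>\<in>{p. p permutes (UNIV::'n set)}. \<Sum>\<tau>\<in>{p. p permutes (UNIV::'n set)}. \<Prod>t\<in>UNIV. A (f t) $ (\<rho> t) $ (\<tau> t))"

lemma expand:
  fixes A :: "nat \<Rightarrow> complex^'n::finite^'n"
  assumes K: "finite K"
  shows "of_nat (fact CARD('n)) * per (\<Sum>k\<in>K. A k) = (\<Sum>f\<in>PiE UNIV (\<lambda>_. K). W A f)"
proof -
  let ?P = "{p. p permutes (UNIV::'n set)}"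
  have "of_nat (fact CARD('n)) * per (\<Sum>k\<in>K. A k)
     = (\<Sum>\<rho>\<in>?P. \<Sum>\<tau>\<in>?P. \<Prod>t\<in>UNIV. \<Sum>k\<in>K. A k $ (\<rho> t) $ (\<tau> t))"
    unfolding per_double[symmetric] by simp
  also have "\<dots> = (\<Sum>\<rho>\<in>?P. \<Sum>\<tau>\<in>?P. \<Sum>f\<in>PiE UNIV (\<lambda>_. K). \<Prod>t\<in>UNIV. A (f t) $ (\<rho> t) $ (\<tau> t))"
    using K by (simp add: prod_sum_PiE)
  also have "\<dots> = (\<Sum>f\<in>PiE UNIV (\<lambda>_. K). W A f)"
    unfolding W_def by (simp add: sum.swap[of _ ?P "PiE UNIV (\<lambda>_. K)"])
  finally show ?thesis .
qed

lemma psd_psdf: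
  fixes A :: "complex^'n::finite^'n"
  assumes "psd A" shows "psdf (\<lambda>i j. A $ i $ j)"
  unfolding psdf_def qf_def
proof (intro conjI allI)
  fix i j show "A $ i $ j = cnj (A $ j $ i)" using assms unfolding psd_def by blast
next
  fix x :: "'n \<Rightarrow> complex"
  have "0 \<le> (\<Sum>i\<in>UNIV. \<Sum>j\<in>UNIV. cnj ((\<chi> k. x k) $ i) * A $ i $ j * (\<chi> k. x k) $ j)"
    using assms unfolding psd_def by blast
  then show "0 \<le> (\<Sum>i\<in>UNIV. \<Sum>j\<in>UNIV. cnj (x i) * A $ i $ j * x j)" by simp
qed

lemma W_nonneg:
  fixes A :: "nat \<Rightarrow> complex^'n::finite^'n"
  assumes "\<And>k. psd (A k)"
  shows "0 \<le> W A f"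
  unfolding W_def
  by (rule tensor_nonneg[of "\<lambda>t i j. A (f t) $ i $ j"]) (rule psd_psdf[OF assms])


lemma nonneg_scale: "0 \<le> of_nat n * (z::complex) \<Longrightarrow> n > 0 \<Longrightarrow> 0 \<le> z"
  by (auto simp: less_eq_complex_def zero_le_mult_iff)

theorem corollary3p3:
  fixes A1 A2 A3 :: "complex^'n::finite^'n"
  assumes "psd A1" and "psd A2" and "psd A3"
  shows "per (A1 + A2 + A3) + per A1 + per A2 + per A3
           \<ge> per (A1 + A2) + per (A1 + A3) + per (A2 + A3)"
proof -
  define A where "A = (\<lambda>k::nat. if k = 0 then A1 else if k = 1 then A2 else A3)"
  have psA: "\<And>k. psd (A k)" unfolding A_def using assms by auto
  define F where "F = (\<lambda>K::nat set. PiE (UNIV::'n set) (\<lambda>_. K))"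
  define s where "s = (\<lambda>K. sum (W A) (F K))"
  define c where "c = (of_nat (fact CARD('n)) :: complex)"
  have e: "c * per (\<Sum>k\<in>K. A k) = s K" if "finite K" for K
    unfolding c_def s_def F_def using expand[OF that] .
  have finF: "finite (F K)" if "finite K" for K unfolding F_def using that by (simp add: finite_PiE)
  have FI: "F K \<inter> F L = F (K \<inter> L)" for K L unfolding F_def by (simp add: PiE_Int)
  have F0: "F {} = {}" unfolding F_def by simp
  have h123: "A1 + A2 + A3 = (\<Sum>k\<in>{0,1,2}. A k)" by (simp add: A_def add.assoc)
  have h12: "A1 + A2 = (\<Sum>k\<in>{0,1}. A k)" by (simp add: A_def)
  have h13: "A1 + A3 = (\<Sum>k\<in>{0,2}. A k)" by (simp add: A_def)
  have h23: "A2 + A3 = (\<Sum>k\<in>{1,2}. A k)" by (simp add: A_def)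
  have h1: "A1 = (\<Sum>k\<in>{0}. A k)" by (simp add: A_def)
  have h2: "A2 = (\<Sum>k\<in>{1}. A k)" by (simp add: A_def)
  have h3: "A3 = (\<Sum>k\<in>{2}. A k)" by (simp add: A_def)
  define X where "X = F {0,1}"
  define Y where "Y = F {0,2}"
  define Z where "Z = F {1,2}"
  define U where "U = F {0,1,2}"
  have fX: "finite X" "finite Y" "finite Z" "finite U" unfolding X_def Y_def Z_def U_def by (simp_all add: finF)
  have XY: "X \<inter> Y = F {0}" unfolding X_def Y_def FI by (rule arg_cong[where f=F]) auto
  have XZ: "X \<inter> Z = F {1}" unfolding X_def Z_def FI by (rule arg_cong[where f=F]) auto
  have YZ: "Y \<inter> Z = F {2}" unfolding Y_def Z_def FI by (rule arg_cong[where f=F]) auto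
  have F12: "F {1} \<inter> F {2} = {}" unfolding FI by (simp add: F0)
  have s1: "sum (W A) (X \<union> Y) = s {0,1} + s {0,2} - s {0}"
    using sum.union_inter[OF fX(1) fX(2), of "W A"] XY unfolding s_def X_def Y_def
    by (simp add: algebra_simps)
  have s2: "sum (W A) ((X \<union> Y) \<inter> Z) = s {1} + s {2}"
  proof -
    have "(X \<union> Y) \<inter> Z = F {1} \<union> F {2}" using XZ YZ by blast
    moreover have "sum (W A) (F {1} \<union> F {2}) = s {1} + s {2}"
      using sum.union_inter[OF finF finF, of "{1}" "{2}" "W A"] F12 unfolding s_def by simp
    ultimately show ?thesis by simp
  qed
  have s3: "sum (W A) (X \<union> Y \<union> Z) = s {0,1} + s {0,2} + s {1,2} - s {0} - s {1} - s {2}"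
    using sum.union_inter[of "X \<union> Y" Z "W A"] fX s1 s2 unfolding s_def Z_def
    by (simp add: algebra_simps)
  have FM: "F K \<subseteq> F L" if "K \<subseteq> L" for K L unfolding F_def by (rule PiE_mono) (use that in auto)
  have sub: "X \<union> Y \<union> Z \<subseteq> U" unfolding X_def Y_def Z_def U_def
    by (intro Un_least FM) auto
  have s4: "s {0,1,2} = sum (W A) (U - (X \<union> Y \<union> Z)) + sum (W A) (X \<union> Y \<union> Z)"
    unfolding s_def U_def[symmetric] by (rule sum.subset_diff[OF sub fX(4)])
  have "c * ((per (A1 + A2 + A3) + per A1 + per A2 + per A3) - (per (A1 + A2) + per (A1 + A3) + per (A2 + A3)))
      = s {0,1,2} + s {0} + s {1} + s {2} - s {0,1} - s {0,2} - s {1,2}"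
  proof -
    have "c * per (A1 + A2 + A3) = s {0,1,2}" unfolding h123 by (rule e) simp
    moreover have "c * per (A1 + A2) = s {0,1}" unfolding h12 by (rule e) simp
    moreover have "c * per (A1 + A3) = s {0,2}" unfolding h13 by (rule e) simp
    moreover have "c * per (A2 + A3) = s {1,2}" unfolding h23 by (rule e) simp
    moreover have "c * per A1 = s {0}" unfolding h1 by (rule e) simp
    moreover have "c * per A2 = s {1}" unfolding h2 by (rule e) simp
    moreover have "c * per A3 = s {2}" unfolding h3 by (rule e) simp
    ultimately show ?thesis by (simp add: algebra_simps)
  qed
  also have "\<dots> = sum (W A) (U - (X \<union> Y \<union> Z))" using s3 s4 by (simp add: algebra_simps)
  also have "0 \<le> \<dots>" by (intro sum_nonneg W_nonneg psA)
  finally have "0 \<le> c * ((per (A1 + A2 + A3) + per A1 + per A2 + per A3) - (per (A1 + A2) + per (A1 + A3) + per (A2 + A3)))" .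
  hence "0 \<le> (per (A1 + A2 + A3) + per A1 + per A2 + per A3) - (per (A1 + A2) + per (A1 + A3) + per (A2 + A3))"
    unfolding c_def by (rule nonneg_scale) simp
  thus ?thesis by simp
qed

end
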